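(* Let ${\mathbf{x}}^* \in \mathbb{R}^n$ with ${\mathbf{x}}^* \geq 0$ componentwise, and let $\mathcal{J} = \mathrm{supp}({\mathbf{x}}^* )$, so ${\mathbf{x}}^* = \sum_{j\in\mathcal{J}} x_j^* {\mathbf{e}}_j$. Assume there exists a vector ${\mathbf{c}} \in \mathbb{R}^n$ such that $$\frac{P {\mathbf{e}}_j}{\| P {\mathbf{e}}_j \|_2} \cdot {\mathbf{c}} = 1 \quad \forall j \in \mathcal{J}, \qquad \frac{P {\mathbf{e}}_i}{\| P {\mathbf{e}}_i \|_2} \cdot {\mathbf{c}} < 1 \quad \forall i \in \mathcal{J}^c.$$ Let $s \in [\|{\mathbf{x}}^*\|_\infty, \infty]$. Then every solution ${\mathbf{y}}$ of $$\min_{0 \leq {\mathbf{x}} \leq s} \| W {\mathbf{x}} \|_1 \quad \text{subject to} \quad A {\mathbf{x}} = A {\mathbf{x}}^* \qquad (\ast)$$ satisfies $\mathrm{supp}({\mathbf{y}}) \subseteq \mathrm{supp}({\mathbf{x}}^* )$. Moreover, ${\mathbf{x}}^*$ is a solution of $(\ast)$.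
   Context: $A \in \mathbb{R}^{m\times n}$ is a matrix, $A^\dagger$ its Moore–Penrose pseudoinverse, and $P = A^\dagger A$ the orthogonal projection of $\mathbb{R}^n$ onto $\mathcal{N}(A)^\perp$. ${\mathbf{e}}_1,\dots,{\mathbf{e}}_n$ are the standard unit vectors, and it is assumed that no ${\mathbf{e}}_i$ lies in $\mathcal{N}(A)$, so $w_i := \|P{\mathbf{e}}_i\|_2 > 0$ for all $i$. $W = \mathrm{diag}(w_1,\dots,w_n)$. The constraint $0 \le {\mathbf{x}} \le s$ is componentwise; $s=\infty$ means only ${\mathbf{x}}\ge 0$ is imposed. $\mathcal{J}^c$ denotes the complement of $\mathcal{J}$ in $\{1,\dots,n\}$. *)

theory Defs
  imports "HOL-Analysis.Analysis"
begin

definition pinv :: "real^'n^'m \<Rightarrow> real^'m^'n" where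
  "pinv A = (THE X. A ** X ** A = A \<and> X ** A ** X = X \<and>
                    transpose (A ** X) = A ** X \<and> transpose (X ** A) = X ** A)"

text \<open>P = pinv A * A, the orthogonal projection onto the orthogonal complement of null A.\<close>
definition projP :: "real^'n^'m \<Rightarrow> real^'n^'n" where
  "projP A = pinv A ** A"

definition wgt :: "real^'n^'m \<Rightarrow> 'n \<Rightarrow> real" where
  "wgt A i = norm (projP A *v axis i 1)"

definition wl1 :: "real^'n^'m \<Rightarrow> real^'n \<Rightarrow> real" where
  "wl1 A x = (\<Sum>i\<in>UNIV. \<bar>wgt A i * x $ i\<bar>)"

definition supp :: "real^'n \<Rightarrow> 'n set" where
  "supp x = {i. x $ i \<noteq> 0}"

definition feasible :: "real^'n^'m \<Rightarrow> real^'m \<Rightarrow> ereal \<Rightarrow> real^'n \<Rightarrow> bool" where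
  "feasible A b s x \<longleftrightarrow> (\<forall>i. 0 \<le> x $ i \<and> ereal (x $ i) \<le> s) \<and> A *v x = b"

definition is_solution :: "real^'n^'m \<Rightarrow> real^'m \<Rightarrow> ereal \<Rightarrow> real^'n \<Rightarrow> bool" where
  "is_solution A b s y \<longleftrightarrow> feasible A b s y \<and>
     (\<forall>z. feasible A b s z \<longrightarrow> wl1 A y \<le> wl1 A z)"

end

theory Submission
  imports Defs
begin

lemma key_inner:
  fixes M :: "real^'n^'k" and z :: "real^'n" and c :: "real^'k"
  shows "(M *v z) \<bullet> c = (\<Sum>i\<in>UNIV. z$i * ((M *v axis i 1) \<bullet> c))"
proof -
  have col: "(M *v axis i 1) $ k = M $ k $ i" for i k
    by (simp add: matrix_vector_mult_def axis_def if_distrib sum.delta cong: if_cong)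
  have "(M *v z) \<bullet> c = (\<Sum>k\<in>UNIV. (\<Sum>i\<in>UNIV. M$k$i * z$i) * c$k)"
    by (simp add: inner_vec_def matrix_vector_mult_def mult.commute)
  also have "\<dots> = (\<Sum>i\<in>UNIV. \<Sum>k\<in>UNIV. z$i * (M$k$i * c$k))"
    by (subst sum.swap) (simp add: sum_distrib_left sum_distrib_right algebra_simps)
  also have "\<dots> = (\<Sum>i\<in>UNIV. z$i * ((M *v axis i 1) \<bullet> c))"
    by (simp add: inner_vec_def col sum_distrib_left mult.commute)
  finally show ?thesis .
qed

theorem theorem1:
  fixes A :: "real^'n^'m" and xs c :: "real^'n" and s :: ereal
  assumes no_null: "\<And>i. projP A *v axis i 1 \<noteq> 0"
    and xs_nonneg: "\<And>i. 0 \<le> xs $ i"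
    and c_on: "\<And>j. j \<in> supp xs \<Longrightarrow>
        ((1 / norm (projP A *v axis j 1)) *\<^sub>R (projP A *v axis j 1)) \<bullet> c = 1"
    and c_off: "\<And>i. i \<notin> supp xs \<Longrightarrow>
        ((1 / norm (projP A *v axis i 1)) *\<^sub>R (projP A *v axis i 1)) \<bullet> c < 1"
    and s_ge: "ereal (infnorm xs) \<le> s"
  shows "(\<forall>y. is_solution A (A *v xs) s y \<longrightarrow> supp y \<subseteq> supp xs)
         \<and> is_solution A (A *v xs) s xs"
proof -
  define P where "P = projP A"
  define w where "w i = wgt A i" for i
  define g where "g i = (P *v axis i 1) \<bullet> c" for i
  have wpos: "w i > 0" for i using no_null[of i] by (simp add: w_def wgt_def)
  have gJ: "g i = w i" if "i \<in> supp xs" for i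
  proof -
    have "(1 / w i) * g i = 1" using c_on[OF that]
      unfolding g_def w_def wgt_def P_def by (simp only: inner_scaleR_left)
    then show ?thesis using wpos[of i] by (simp add: field_simps)
  qed
  have gN: "g i < w i" if "i \<notin> supp xs" for i
  proof -
    have "(1 / w i) * g i < 1" using c_off[OF that]
      unfolding g_def w_def wgt_def P_def by (simp only: inner_scaleR_left)
    then show ?thesis using wpos[of i] by (simp add: field_simps)
  qed
  have gle: "g i \<le> w i" for i using gJ[of i] gN[of i] by (cases "i \<in> supp xs") simp_all
  have wl1_eq: "wl1 A z = (\<Sum>i\<in>UNIV. z$i * w i)" if "\<And>i. 0 \<le> z$i" for z
    unfolding wl1_def w_def
    by (rule sum.cong) (use that wpos in \<open>auto simp: abs_mult w_def mult.commute less_imp_le\<close>)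
  have Pz: "(P *v z) \<bullet> c = (\<Sum>i\<in>UNIV. z$i * g i)" for z
    unfolding g_def by (rule key_inner)
  have Peq: "P *v z = P *v xs" if "A *v z = A *v xs" for z
    using that by (simp add: P_def projP_def matrix_vector_mul_assoc[symmetric])
  have xsval: "(\<Sum>i\<in>UNIV. xs$i * g i) = wl1 A xs"
    unfolding wl1_eq[OF xs_nonneg]
    proof (rule sum.cong)
    fix x show "xs$x * g x = xs$x * w x"
    proof (cases "x \<in> supp xs")
      case True then show ?thesis using gJ by simp
    next
      case False then show ?thesis by (simp add: supp_def)
    qed
  qed simp
  have feas_xs: "feasible A (A *v xs) s xs"
    unfolding feasible_def
  proof (intro conjI allI)
    fix i
    show "0 \<le> xs $ i" by (rule xs_nonneg)
    have "xs $ i \<le> infnorm xs"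
      using component_le_infnorm_cart[of xs i] xs_nonneg[of i] by simp
    then have "ereal (xs $ i) \<le> ereal (infnorm xs)" by simp
    then show "ereal (xs $ i) \<le> s" using s_ge by (rule order_trans)
  qed simp
  have lb: "wl1 A xs \<le> wl1 A z" and
       gap: "wl1 A z - wl1 A xs = (\<Sum>i\<in>UNIV. z$i * (w i - g i))"
    if f: "feasible A (A *v xs) s z" for z
  proof -
    have nn: "\<And>i. 0 \<le> z$i" and Az: "A *v z = A *v xs" using f by (auto simp: feasible_def)
    have "wl1 A xs = (\<Sum>i\<in>UNIV. z$i * g i)"
      using xsval Pz[of z] Pz[of xs] Peq[OF Az] by simp
    moreover have "(\<Sum>i\<in>UNIV. z$i * g i) \<le> (\<Sum>i\<in>UNIV. z$i * w i)"
      by (rule sum_mono) (simp add: mult_left_mono gle nn)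
    ultimately show "wl1 A xs \<le> wl1 A z" using wl1_eq[OF nn] by simp
    show "wl1 A z - wl1 A xs = (\<Sum>i\<in>UNIV. z$i * (w i - g i))"
      using \<open>wl1 A xs = _\<close> wl1_eq[OF nn]
      by (simp add: right_diff_distrib sum_subtractf)
  qed
  have sol: "is_solution A (A *v xs) s xs"
    unfolding is_solution_def using feas_xs lb by blast
  moreover have "supp y \<subseteq> supp xs" if y: "is_solution A (A *v xs) s y" for y
  proof
    fix i assume iy: "i \<in> supp y"
    have fy: "feasible A (A *v xs) s y" using y by (simp add: is_solution_def)
    have nn: "\<And>i. 0 \<le> y$i" using fy by (simp add: feasible_def)
    have "wl1 A y \<le> wl1 A xs" using y feas_xs by (simp add: is_solution_def)
    then have "(\<Sum>i\<in>UNIV. y$i * (w i - g i)) \<le> 0" using gap[OF fy] by simp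
    moreover have "0 \<le> (\<Sum>i\<in>UNIV. y$i * (w i - g i))"
      by (rule sum_nonneg) (use nn gle in simp)
    ultimately have "(\<Sum>i\<in>UNIV. y$i * (w i - g i)) = 0"
      by linarith
    then have "y$i * (w i - g i) = 0"
      using sum_nonneg_eq_0_iff[of UNIV "\<lambda>j. y$j * (w j - g j)"] nn gle by simp
    then have "w i - g i = 0" using iy by (simp add: supp_def)
    then show "i \<in> supp xs" using gN[of i] by linarith
  qed
  ultimately show ?thesis by blast
qed

end
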